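(* A term $t$ of the silly substitution calculus is weakly $\to_w$-normalizing if and only if it is strongly $\to_w$-normalizing.
   Context: Terms: $t ::= x \mid \lambda x.t \mid t\,u \mid t[x\backslash u]$ ($t[x\backslash u]$ an explicit substitution binding $x$ in $t$; terms up to $\alpha$). Values $v ::= \lambda x.t$. Substitution contexts $S ::= \langle\cdot\rangle\mid S[x\backslash u]$. Weak contexts $W ::= \langle\cdot\rangle \mid W\,t \mid t\,W \mid t[x\backslash W] \mid W[x\backslash u]$; $W\langle\langle t\rangle\rangle$ is plugging without capture of free variables of $t$. Root rules: $S\langle\lambda x.t\rangle u\mapsto_m S\langle t[x\backslash u]\rangle$; $W\langle\langle x\rangle\rangle[x\backslash u]\mapsto_e W\langle\langle u\rangle\rangle[x\backslash u]$; $t[x\backslash S\langle v\rangle]\mapsto_{gcv} S\langle t\rangle$ if $x\notin\mathrm{fv}(t)$. $\to_w$ is the union of their closures under weak contexts. Weakly normalizing: some reduction sequence reaches a normal form; strongly normalizing: no infinite reduction sequence. *)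

theory Defs
  imports Main
begin

text \<open>Terms of the silly substitution calculus, up to alpha-equivalence, represented
with de Bruijn indices. Sub t u is the explicit substitution t[x\u], binding index 0 in t.\<close>

datatype trm = Var nat | Lam trm | App trm trm | Sub trm trm

fun lift :: "nat \<Rightarrow> nat \<Rightarrow> trm \<Rightarrow> trm" where
  "lift k c (Var i) = Var (if i < c then i else i + k)"
| "lift k c (Lam t) = Lam (lift k (Suc c) t)"
| "lift k c (App t u) = App (lift k c t) (lift k c u)"
| "lift k c (Sub t u) = Sub (lift k (Suc c) t) (lift k c u)"

text \<open>Substitution contexts S ::= <.> | S[x\u], represented as the list of the
substituted terms, outermost first: plugS [u1,...,uk] t = t[.\uk]...[.\u1].\<close>
fun plugS :: "trm list \<Rightarrow> trm \<Rightarrow> trm" where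
  "plugS [] t = t"
| "plugS (u # us) t = Sub (plugS us t) u"

datatype wctx = Hole | AppL wctx trm | AppR trm wctx | SubArg trm wctx | SubBody wctx trm

fun plugW :: "wctx \<Rightarrow> trm \<Rightarrow> trm" where
  "plugW Hole t = t"
| "plugW (AppL W u) t = App (plugW W t) u"
| "plugW (AppR u W) t = App u (plugW W t)"
| "plugW (SubArg u W) t = Sub u (plugW W t)"
| "plugW (SubBody W u) t = Sub (plugW W t) u"

fun depthW :: "wctx \<Rightarrow> nat" where
  "depthW Hole = 0"
| "depthW (AppL W u) = depthW W"
| "depthW (AppR u W) = depthW W"
| "depthW (SubArg u W) = depthW W"
| "depthW (SubBody W u) = Suc (depthW W)"

text \<open>Capture-avoiding plugging is realised by shifting.
 m:   S<\<lambda>x.t> u \<mapsto> S<t[x\u]>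
 e:   W<<x>>[x\u] \<mapsto> W<<u>>[x\u]
 gcv: t[x\S<v>] \<mapsto> S<t>  if x \<notin> fv(t)  (i.e. the body is a shifted term).\<close>
inductive root_step :: "trm \<Rightarrow> trm \<Rightarrow> bool" where
  rule_m: "root_step (App (plugS S (Lam t)) u) (plugS S (Sub t (lift (length S) 0 u)))"
| rule_e: "root_step (Sub (plugW W (Var (depthW W))) u)
                     (Sub (plugW W (lift (Suc (depthW W)) 0 u)) u)"
| rule_gcv: "root_step (Sub (lift 1 0 t) (plugS S (Lam s))) (plugS S (lift (length S) 0 t))"

inductive wstep :: "trm \<Rightarrow> trm \<Rightarrow> bool" where
  "root_step t u \<Longrightarrow> wstep (plugW W t) (plugW W u)"

definition normal_w :: "trm \<Rightarrow> bool" where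
  "normal_w t \<longleftrightarrow> \<not> (\<exists>u. wstep t u)"

definition WN_w :: "trm \<Rightarrow> bool" where
  "WN_w t \<longleftrightarrow> (\<exists>u. wstep\<^sup>*\<^sup>* t u \<and> normal_w u)"

definition SN_w :: "trm \<Rightarrow> bool" where
  "SN_w t \<longleftrightarrow> \<not> (\<exists>f. f 0 = t \<and> (\<forall>n. wstep (f n) (f (Suc n))))"

end

theory Submission
  imports Defs "HOL-Library.Multiset"
begin
datatype ty = Star | Arr "ty multiset" ty

type_synonym env = "nat \<Rightarrow> ty multiset"

definition emp :: env where "emp = (\<lambda>_. {#})"
definition eadd :: "env \<Rightarrow> env \<Rightarrow> env" where "eadd G D = (\<lambda>j. G j + D j)"
definition single :: "nat \<Rightarrow> ty multiset \<Rightarrow> env" where "single i K = (\<lambda>j. if j = i then K else {#})"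
definition shd :: "env \<Rightarrow> env" where "shd G = (\<lambda>j. G (Suc j))"
definition ins :: "nat \<Rightarrow> nat \<Rightarrow> env \<Rightarrow> env" where
  "ins k c G = (\<lambda>j. if j < c then G j else if j < c + k then {#} else G (j - k))"
definition dropenv :: "nat \<Rightarrow> env \<Rightarrow> env" where "dropenv k G = (\<lambda>j. G (j + k))"
definition ele :: "env \<Rightarrow> env \<Rightarrow> bool" where "ele G D \<longleftrightarrow> (\<forall>j. G j \<subseteq># D j)"

lemma env_simps:
  "emp j = {#}" "eadd G D j = G j + D j" "single i K j = (if j = i then K else {#})"
  "shd G j = G (Suc j)" "ins k c G j = (if j < c then G j else if j < c + k then {#} else G (j - k))"
  "dropenv k G j = G (j + k)"
  by (auto simp: emp_def eadd_def single_def shd_def ins_def dropenv_def)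

inductive tp :: "env \<Rightarrow> trm \<Rightarrow> ty \<Rightarrow> nat \<Rightarrow> bool"
  and mtp :: "env \<Rightarrow> trm \<Rightarrow> ty multiset \<Rightarrow> nat \<Rightarrow> bool" where
  tVar: "tp (single i {#A#}) (Var i) A 1"
| tStar: "tp emp (Lam t) Star 0"
| tLam: "tp G t A n \<Longrightarrow> tp (shd G) (Lam t) (Arr (G 0) A) (Suc n)"
| tApp: "tp G t (Arr M A) n \<Longrightarrow> mtp D u (add_mset B M) m \<Longrightarrow> tp (eadd G D) (App t u) A (Suc (n + m))"
| tSub: "tp G t A n \<Longrightarrow> mtp D u (add_mset B (G 0)) m \<Longrightarrow> tp (eadd (shd G) D) (Sub t u) A (Suc (n + m))"
| mNil: "mtp emp u {#} 0"
| mCons: "tp G u A n \<Longrightarrow> mtp D u M m \<Longrightarrow> mtp (eadd G D) u (add_mset A M) (n + m)"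

inductive_cases tpVarE: "tp G (Var i) A n"
inductive_cases tpLamE: "tp G (Lam t) A n"
inductive_cases tpAppE: "tp G (App t u) A n"
inductive_cases tpSubE: "tp G (Sub t u) A n"
inductive_cases mtpNilE: "mtp D u {#} m"

lemma mtp_induct[consumes 1, case_names mNil mCons]:
  assumes "mtp D u M m" "\<And>u. P emp u {#} 0"
    "\<And>G u A n D M m. tp G u A n \<Longrightarrow> mtp D u M m \<Longrightarrow> P D u M m \<Longrightarrow> P (eadd G D) u (add_mset A M) (n+m)"
  shows "P D u M m"
proof -
  have "tp G t A n \<Longrightarrow> True" and "mtp D u M m \<Longrightarrow> P D u M m" for G t A n D u M m
    by (induction rule: tp_mtp.inducts) (auto intro: assms(2,3))
  then show ?thesis using assms(1) by blast
qed

lemma typ_env: "tp G t A n \<Longrightarrow> G = G' \<Longrightarrow> tp G' t A n" by simp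
lemma mtyp_env: "mtp G t A n \<Longrightarrow> G = G' \<Longrightarrow> mtp G' t A n" by simp

lemma eadd_emp[simp]: "eadd G emp = G" "eadd emp G = G" by (auto intro!: ext simp: env_simps)
lemma eadd_ac: "eadd G D = eadd D G" "eadd (eadd G D) E = eadd G (eadd D E)" "eadd G (eadd D E) = eadd D (eadd G E)"
  by (auto intro!: ext simp: add_ac env_simps)

lemma mtyp_single: "mtp D u {#A#} m \<longleftrightarrow> tp D u A m"
proof
  assume "mtp D u {#A#} m"
  then show "tp D u A m"
    by (cases rule: mtp.cases) (auto elim: mtpNilE)
next
  assume "tp D u A m" then show "mtp D u {#A#} m"
    using tp_mtp.mCons[OF _ tp_mtp.mNil, of D u A m] by simp
qed

lemma mtyp_merge: "mtp D1 u M1 m1 \<Longrightarrow> mtp D2 u M2 m2 \<Longrightarrow> mtp (eadd D1 D2) u (M1 + M2) (m1 + m2)"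
proof (induction rule: mtp_induct)
  case (mNil u) then show ?case by simp
next
  case (mCons G u A n D M m)
  from mCons.prems have "mtp (eadd D D2) u (M + M2) (m + m2)" by (rule mCons.IH)
  from tp_mtp.mCons[OF mCons.hyps(1) this] show ?case by (simp add: eadd_ac add.assoc)
qed

lemma mtyp_split: "mtp D u M m \<Longrightarrow> M = M1 + M2 \<Longrightarrow>
   \<exists>D1 D2 m1 m2. D = eadd D1 D2 \<and> m = m1 + m2 \<and> mtp D1 u M1 m1 \<and> mtp D2 u M2 m2"
proof (induction arbitrary: M1 M2 rule: mtp_induct)
  case (mNil u) then show ?case using tp_mtp.mNil[of u] eadd_emp(1)[of emp] by (metis add.right_neutral empty_eq_union)
next
  case (mCons G u A n D M m)
  show ?case
  proof (cases "A \<in># M1")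
    case True
    then obtain M1' where M1: "M1 = add_mset A M1'" by (metis multi_member_split)
    with mCons.prems have "M = M1' + M2" by simp
    from mCons.IH[OF this] obtain D1 D2 m1 m2 where h: "D = eadd D1 D2" "m = m1 + m2" "mtp D1 u M1' m1" "mtp D2 u M2 m2" by blast
    show ?thesis
      apply (rule exI[of _ "eadd G D1"], rule exI[of _ D2], rule exI[of _ "n + m1"], rule exI[of _ m2])
      using h tp_mtp.mCons[OF mCons.hyps(1) h(3)] M1 by (auto simp: eadd_ac)
  next
    case False
    with mCons.prems have "A \<in># M2" by (metis add_mset_add_single union_iff multi_self_add_other_not_self insert_DiffM2 single_subset_iff mset_subset_eq_add_right)
    then obtain M2' where M2: "M2 = add_mset A M2'" by (metis multi_member_split)
    with mCons.prems have "M = M1 + M2'" by simp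
    from mCons.IH[OF this] obtain D1 D2 m1 m2 where h: "D = eadd D1 D2" "m = m1 + m2" "mtp D1 u M1 m1" "mtp D2 u M2' m2" by blast
    show ?thesis
      apply (rule exI[of _ D1], rule exI[of _ "eadd G D2"], rule exI[of _ m1], rule exI[of _ "n + m2"])
      using h tp_mtp.mCons[OF mCons.hyps(1) h(4)] M2 by (auto simp: eadd_ac)
  qed
qed

lemma tVar': "tp (single i {#A#}) (Var i) A (Suc 0)" using tp_mtp.tVar by simp

lemma ins_single: "ins k c (single i K) = single (if i < c then i else i + k) K"
  by (auto intro!: ext simp: env_simps)
lemma ins_emp[simp]: "ins k c emp = emp" by (auto intro!: ext simp: env_simps)
lemma ins_eadd: "ins k c (eadd G D) = eadd (ins k c G) (ins k c D)" by (auto intro!: ext simp: env_simps)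
lemma shd_ins: "shd (ins k (Suc c) G) = ins k c (shd G)" by (auto intro!: ext simp: env_simps Suc_diff_le)
lemma ins_Suc0: "ins k (Suc c) G 0 = G 0" by (simp add: env_simps)

lemma lift_tp:
  shows "tp G t A n \<Longrightarrow> (\<forall>c. tp (ins k c G) (lift k c t) A n)"
    and "mtp D u M m \<Longrightarrow> (\<forall>c. mtp (ins k c D) (lift k c u) M m)"
proof (induction rule: tp_mtp.inducts)
  case (tVar i A)
  then show ?case by (auto simp: ins_single intro: tVar')
next
  case (tStar t)
  then show ?case by (auto intro: tp_mtp.tStar)
next
  case (tLam G t A n)
  then show ?case using tp_mtp.tLam[of "ins k (Suc _) G"] by (auto simp: shd_ins ins_Suc0)
next
  case (tApp G t M A n D u B m)
  then show ?case using tp_mtp.tApp by (metis lift.simps(3) ins_eadd)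
next
  case (tSub G t A n D u B m)
  show ?case
  proof
    fix c
    from tSub.IH(1) have "tp (ins k (Suc c) G) (lift k (Suc c) t) A n" by blast
    moreover from tSub.IH(2) have "mtp (ins k c D) (lift k c u) (add_mset B ((ins k (Suc c) G) 0)) m"
      by (simp add: ins_Suc0)
    ultimately show "tp (ins k c (eadd (shd G) D)) (lift k c (Sub t u)) A (Suc (n + m))"
      using tp_mtp.tSub by (fastforce simp: ins_eadd shd_ins)
  qed
next
  case (mNil u)
  then show ?case by (auto intro: tp_mtp.mNil)
next
  case (mCons G u A n D M m)
  then show ?case using tp_mtp.mCons by (auto simp: ins_eadd)
qed

lemma unlift_tp:
  shows "tp G' s A n \<Longrightarrow> (\<forall>t c. s = lift k c t \<longrightarrow> (\<exists>G. G' = ins k c G \<and> tp G t A n))"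
    and "mtp D' s M m \<Longrightarrow> (\<forall>t c. s = lift k c t \<longrightarrow> (\<exists>D. D' = ins k c D \<and> mtp D t M m))"
proof (induction rule: tp_mtp.inducts)
  case (tVar i A)
  show ?case
  proof (intro allI impI)
    fix t c assume "Var i = lift k c t"
    then obtain j where t: "t = Var j" and i: "i = (if j < c then j else j + k)" by (cases t) auto
    show "\<exists>G. single i {#A#} = ins k c G \<and> tp G t A 1"
      using t i tVar'[of j A] by (intro exI[of _ "single j {#A#}"]) (auto simp: ins_single)
  qed
next
  case (tStar t)
  show ?case
  proof (intro allI impI)
    fix t0 c assume "Lam t = lift k c t0"
    then obtain s where t0: "t0 = Lam s" by (cases t0) auto
    then show "\<exists>G. emp = ins k c G \<and> tp G t0 Star 0" using tp_mtp.tStar by (intro exI[of _ emp]) simp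
  qed
next
  case (tLam G t A n)
  show ?case
  proof (intro allI impI)
    fix t0 c assume "Lam t = lift k c t0"
    then obtain s where t0: "t0 = Lam s" and t: "t = lift k (Suc c) s" by (cases t0) auto
    from tLam.IH t obtain G0 where "G = ins k (Suc c) G0" "tp G0 s A n" by blast
    then show "\<exists>G'. shd G = ins k c G' \<and> tp G' t0 (Arr (G 0) A) (Suc n)"
      using t0 tp_mtp.tLam[of G0 s A n] by (auto simp: shd_ins ins_Suc0)
  qed
next
  case (tApp G t M A n D u B m)
  show ?case
  proof (intro allI impI)
    fix t0 c assume "App t u = lift k c t0"
    then obtain a b where t0: "t0 = App a b" and t: "t = lift k c a" "u = lift k c b" by (cases t0) auto
    from tApp.IH t obtain G0 D0 where h: "G = ins k c G0" "tp G0 a (Arr M A) n" "D = ins k c D0" "mtp D0 b (add_mset B M) m" by blast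
    have "tp (eadd G0 D0) (App a b) A (Suc (n + m))" by (rule tp_mtp.tApp[OF h(2) h(4)])
    moreover have "eadd G D = ins k c (eadd G0 D0)" by (simp add: h ins_eadd)
    ultimately show "\<exists>G'. eadd G D = ins k c G' \<and> tp G' t0 A (Suc (n + m))"
      using t0 by blast
  qed
next
  case (tSub G t A n D u B m)
  show ?case
  proof (intro allI impI)
    fix t0 c assume "Sub t u = lift k c t0"
    then obtain a b where t0: "t0 = Sub a b" and t: "t = lift k (Suc c) a" "u = lift k c b" by (cases t0) auto
    from tSub.IH t obtain G0 D0 where h: "G = ins k (Suc c) G0" "tp G0 a A n" "D = ins k c D0" "mtp D0 b (add_mset B (G 0)) m" by blast
    then have "mtp D0 b (add_mset B (G0 0)) m" by (simp add: ins_Suc0)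
    then have "tp (eadd (shd G0) D0) (Sub a b) A (Suc (n + m))" by (rule tp_mtp.tSub[OF h(2)])
    moreover have "eadd (shd G) D = ins k c (eadd (shd G0) D0)" by (simp add: h ins_eadd shd_ins)
    ultimately show "\<exists>G'. eadd (shd G) D = ins k c G' \<and> tp G' t0 A (Suc (n + m))"
      using t0 by blast
  qed
next
  case (mNil u)
  then show ?case by (auto intro!: exI[of _ emp] tp_mtp.mNil)
next
  case (mCons G u A n D M m)
  show ?case
  proof (intro allI impI)
    fix t0 c assume a: "u = lift k c t0"
    from mCons.IH a obtain G0 D0 where h: "G = ins k c G0" "tp G0 t0 A n" "D = ins k c D0" "mtp D0 t0 M m" by blast
    have "mtp (eadd G0 D0) t0 (add_mset A M) (n + m)" by (rule tp_mtp.mCons[OF h(2) h(4)])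
    moreover have "eadd G D = ins k c (eadd G0 D0)" by (simp add: h ins_eadd)
    ultimately show "\<exists>D'. eadd G D = ins k c D' \<and> mtp D' t0 (add_mset A M) (n + m)" by blast
  qed
qed

lemma ele_refl[simp]: "ele G G" by (simp add: ele_def)
lemma ele_trans: "ele G1 G2 \<Longrightarrow> ele G2 G3 \<Longrightarrow> ele G1 G3" unfolding ele_def using subset_mset.order_trans by blast
lemma ele_eadd_mono: "ele G1 G2 \<Longrightarrow> ele D1 D2 \<Longrightarrow> ele (eadd G1 D1) (eadd G2 D2)"
  unfolding ele_def by (simp add: env_simps subset_mset.add_mono)
lemma ele_eadd_left: "ele G (eadd G D)" unfolding ele_def by (simp add: env_simps)
lemma ele_shd: "ele G1 G2 \<Longrightarrow> ele (shd G1) (shd G2)" unfolding ele_def by (simp add: env_simps)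

lemma mtp_sub: "mtp D u M m \<Longrightarrow> M' \<subseteq># M \<Longrightarrow> \<exists>D' m'. mtp D' u M' m' \<and> ele D' D \<and> m' \<le> m"
proof -
  assume a: "mtp D u M m" "M' \<subseteq># M"
  then have "M = M' + (M - M')" by simp
  from mtyp_split[OF a(1) this] obtain D1 D2 m1 m2 where "D = eadd D1 D2" "m = m1 + m2" "mtp D1 u M' m1" by blast
  then show ?thesis using ele_eadd_left by fastforce
qed

lemma plugS_tp:
  "tp G (plugS S s) C n \<Longrightarrow> \<exists>Gs ns D. tp Gs s C ns \<and> G = eadd (dropenv (length S) Gs) D \<and> ns \<le> n \<and>
   (\<forall>s' Gs' ns' C'. tp Gs' s' C' ns' \<longrightarrow> (\<forall>j<length S. Gs' j = Gs j) \<longrightarrow>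
        tp (eadd (dropenv (length S) Gs') D) (plugS S s') C' (n - ns + ns')) \<and>
   (\<forall>s' Gs' ns' C'. tp Gs' s' C' ns' \<longrightarrow> (\<forall>j<length S. Gs' j \<subseteq># Gs j) \<longrightarrow>
        (\<exists>G'' n''. tp G'' (plugS S s') C' n'' \<and> ele G'' (eadd (dropenv (length S) Gs') D) \<and> n'' + ns \<le> n + ns'))"
proof (induction S arbitrary: G n)
  case Nil
  have d0: "dropenv 0 G = G" for G by (auto intro!: ext simp: env_simps)
  have 1: "tp G s C n" using Nil by simp
  have 2: "G = eadd (dropenv 0 G) emp" by (simp add: d0)
  have 3: "\<forall>s' Gs' ns' C'. tp Gs' s' C' ns' \<longrightarrow> (\<forall>j<0. Gs' j = G j) \<longrightarrow>
        tp (eadd (dropenv 0 Gs') emp) (plugS [] s') C' (n - n + ns')" by (simp add: d0)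
  have 4: "\<forall>s' Gs' ns' C'. tp Gs' s' C' ns' \<longrightarrow> (\<forall>j<0. Gs' j \<subseteq># G j) \<longrightarrow>
        (\<exists>G'' n''. tp G'' (plugS [] s') C' n'' \<and> ele G'' (eadd (dropenv 0 Gs') emp) \<and> n'' + n \<le> n + ns')"
    by (simp add: d0) (metis ele_refl le_refl)
  show ?case unfolding list.size(3) using 1 2 3 4 by blast
next
  case (Cons u us)
  from Cons.prems obtain Gb nb Du B m where h: "G = eadd (shd Gb) Du" "n = Suc (nb + m)"
     "tp Gb (plugS us s) C nb" "mtp Du u (add_mset B (Gb 0)) m"
    by (auto elim: tpSubE)
  from Cons.IH[OF h(3)] obtain Gs ns D1 where ih: "tp Gs s C ns" "Gb = eadd (dropenv (length us) Gs) D1" "ns \<le> nb"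
    "\<And>s' Gs' ns' C'. tp Gs' s' C' ns' \<Longrightarrow> (\<forall>j<length us. Gs' j = Gs j) \<Longrightarrow>
        tp (eadd (dropenv (length us) Gs') D1) (plugS us s') C' (nb - ns + ns')"
    "\<And>s' Gs' ns' C'. tp Gs' s' C' ns' \<Longrightarrow> (\<forall>j<length us. Gs' j \<subseteq># Gs j) \<Longrightarrow>
        (\<exists>G'' n''. tp G'' (plugS us s') C' n'' \<and> ele G'' (eadd (dropenv (length us) Gs') D1) \<and> n'' + ns \<le> nb + ns')"
    by blast
  define k where "k = length us"
  have envG: "G = eadd (dropenv (length (u # us)) Gs) (eadd (shd D1) Du)"
    using h(1) ih(2) by (auto intro!: ext simp: env_simps add_ac)
  have shdeq: "shd (eadd (dropenv k Gs') D1) = eadd (dropenv (Suc k) Gs') (shd D1)" for Gs'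
    by (auto intro!: ext simp: env_simps)
  show ?case
  proof (rule exI[of _ Gs], rule exI[of _ ns], rule exI[of _ "eadd (shd D1) Du"], intro conjI allI impI)
    show "tp Gs s C ns" by (rule ih(1))
    show "G = eadd (dropenv (length (u # us)) Gs) (eadd (shd D1) Du)" by (rule envG)
    show "ns \<le> n" using ih(3) h(2) by simp
  next
    fix s' Gs' ns' C'
    assume a: "tp Gs' s' C' ns'" "\<forall>j<length (u # us). Gs' j = Gs j"
    then have t1: "tp (eadd (dropenv k Gs') D1) (plugS us s') C' (nb - ns + ns')" using ih(4) k_def by simp
    have "(eadd (dropenv k Gs') D1) 0 = Gb 0" using a(2) ih(2) k_def by (simp add: env_simps)
    with h(4) have "mtp Du u (add_mset B ((eadd (dropenv k Gs') D1) 0)) m" by simp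
    from tp_mtp.tSub[OF t1 this]
    have "tp (eadd (shd (eadd (dropenv k Gs') D1)) Du) (Sub (plugS us s') u) C' (Suc (nb - ns + ns' + m))" .
    moreover have "eadd (shd (eadd (dropenv k Gs') D1)) Du = eadd (dropenv (length (u # us)) Gs') (eadd (shd D1) Du)"
      by (auto intro!: ext simp: env_simps add_ac k_def)
    moreover have "Suc (nb - ns + ns' + m) = n - ns + ns'" using ih(3) h(2) by simp
    ultimately show "tp (eadd (dropenv (length (u # us)) Gs') (eadd (shd D1) Du)) (plugS (u # us) s') C' (n - ns + ns')"
      by simp
  next
    fix s' Gs' ns' C'
    assume a: "tp Gs' s' C' ns'" "\<forall>j<length (u # us). Gs' j \<subseteq># Gs j"
    then obtain G'' n'' where g: "tp G'' (plugS us s') C' n''" "ele G'' (eadd (dropenv k Gs') D1)" "n'' + ns \<le> nb + ns'"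
      using ih(5)[of Gs' s' C' ns'] k_def by auto
    have "G'' 0 \<subseteq># Gs' k + D1 0" using g(2) unfolding ele_def env_simps by (metis add_0)
    also have "\<dots> \<subseteq># Gs k + D1 0" using a(2) k_def by (simp add: subset_mset.add_right_mono)
    also have "\<dots> = Gb 0" using ih(2) k_def by (simp add: env_simps)
    finally have "add_mset B (G'' 0) \<subseteq># add_mset B (Gb 0)" by simp
    from mtp_sub[OF h(4) this] obtain Du' m' where d: "mtp Du' u (add_mset B (G'' 0)) m'" "ele Du' Du" "m' \<le> m" by blast
    from tp_mtp.tSub[OF g(1) d(1)]
    have "tp (eadd (shd G'') Du') (plugS (u # us) s') C' (Suc (n'' + m'))" by simp
    moreover have "ele (eadd (shd G'') Du') (eadd (dropenv (length (u # us)) Gs') (eadd (shd D1) Du))"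
    proof -
      have "ele (eadd (shd G'') Du') (eadd (shd (eadd (dropenv k Gs') D1)) Du)"
        by (rule ele_eadd_mono[OF ele_shd[OF g(2)] d(2)])
      moreover have "eadd (shd (eadd (dropenv k Gs') D1)) Du = eadd (dropenv (length (u # us)) Gs') (eadd (shd D1) Du)"
        by (auto intro!: ext simp: env_simps add_ac k_def)
      ultimately show ?thesis by simp
    qed
    moreover have "Suc (n'' + m') + ns \<le> n + ns'" using g(3) d(3) h(2) by simp
    ultimately show "\<exists>G'' n''. tp G'' (plugS (u # us) s') C' n'' \<and>
         ele G'' (eadd (dropenv (length (u # us)) Gs') (eadd (shd D1) Du)) \<and> n'' + ns \<le> n + ns'" by blast
  qed
qed

lemma mtp_emptyD: "mtp D u {#} m \<Longrightarrow> D = emp \<and> m = 0" by (auto elim: mtpNilE)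

lemma E_mtp:
  assumes IH: "\<And>G A n. tp G s A n \<Longrightarrow> \<exists>K G0. K \<noteq> {#} \<and> G = eadd G0 (single i K) \<and>
     (\<forall>D m. mtp D u K m \<longrightarrow> (\<exists>n'. n' + size K = n + m \<and> tp (eadd G0 (ins (Suc i) 0 D)) s' A n'))"
  shows "mtp Dd s0 M mm \<Longrightarrow> s0 = s \<Longrightarrow> \<exists>K G0. (M \<noteq> {#} \<longrightarrow> K \<noteq> {#}) \<and> Dd = eadd G0 (single i K) \<and>
     (\<forall>D m. mtp D u K m \<longrightarrow> (\<exists>m'. m' + size K = mm + m \<and> mtp (eadd G0 (ins (Suc i) 0 D)) s' M m'))"
proof (induction rule: mtp_induct)
  case (mNil u0)
  show ?case
  proof (intro exI[of _ "{#}"] exI[of _ emp] conjI allI impI)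
    show "emp = eadd emp (single i {#})" by (auto intro!: ext simp: env_simps)
  next
    fix D m assume "mtp D u {#} m"
    then have "D = emp" "m = 0" by (auto dest: mtp_emptyD)
    then show "\<exists>m'. m' + size {#} = 0 + m \<and> mtp (eadd emp (ins (Suc i) 0 D)) s' {#} m'"
      using tp_mtp.mNil by simp
  qed simp
next
  case (mCons G s0 A n D M m)
  from IH mCons.hyps(1) mCons.prems obtain K1 G01 where k1: "K1 \<noteq> {#}" "G = eadd G01 (single i K1)"
    "\<And>D m. mtp D u K1 m \<Longrightarrow> (\<exists>n'. n' + size K1 = n + m \<and> tp (eadd G01 (ins (Suc i) 0 D)) s' A n')" by blast
  from mCons.IH mCons.prems obtain K2 G02 where k2: "D = eadd G02 (single i K2)"
    "\<And>D' m'. mtp D' u K2 m' \<Longrightarrow> (\<exists>m''. m'' + size K2 = m + m' \<and> mtp (eadd G02 (ins (Suc i) 0 D')) s' M m'')" by blast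
  show ?case
  proof (rule exI[of _ "K1 + K2"], rule exI[of _ "eadd G01 G02"], intro conjI allI impI)
    show "K1 + K2 \<noteq> {#}" using k1(1) by simp
    show "eadd G D = eadd (eadd G01 G02) (single i (K1 + K2))" using k1(2) k2(1)
      by (auto intro!: ext simp: env_simps add_ac)
  next
    fix Du mu assume "mtp Du u (K1 + K2) mu"
    from mtyp_split[OF this refl] obtain D1 D2 m1 m2 where d: "Du = eadd D1 D2" "mu = m1 + m2" "mtp D1 u K1 m1" "mtp D2 u K2 m2" by blast
    from k1(3)[OF d(3)] obtain n' where n': "n' + size K1 = n + m1" "tp (eadd G01 (ins (Suc i) 0 D1)) s' A n'" by blast
    from k2(2)[OF d(4)] obtain m'' where m'': "m'' + size K2 = m + m2" "mtp (eadd G02 (ins (Suc i) 0 D2)) s' M m''" by blast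
    from tp_mtp.mCons[OF n'(2) m''(2)]
    have "mtp (eadd (eadd G01 (ins (Suc i) 0 D1)) (eadd G02 (ins (Suc i) 0 D2))) s' (add_mset A M) (n' + m'')" .
    moreover have "eadd (eadd G01 (ins (Suc i) 0 D1)) (eadd G02 (ins (Suc i) 0 D2)) = eadd (eadd G01 G02) (ins (Suc i) 0 Du)"
      using d(1) by (auto intro!: ext simp: env_simps add_ac)
    moreover have "(n' + m'') + size (K1 + K2) = (n + m) + mu" using n'(1) m''(1) d(2) by simp
    ultimately show "\<exists>m'. m' + size (K1 + K2) = n + m + mu \<and> mtp (eadd (eadd G01 G02) (ins (Suc i) 0 Du)) s' (add_mset A M) m'"
      by auto
  qed
qed

lemma E_tp:
  "tp G (plugW W (Var (depthW W + i))) A n \<Longrightarrow> \<exists>K G0. K \<noteq> {#} \<and> G = eadd G0 (single i K) \<and>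
     (\<forall>D m. mtp D u K m \<longrightarrow> (\<exists>n'. n' + size K = n + m \<and>
        tp (eadd G0 (ins (Suc i) 0 D)) (plugW W (lift (depthW W + Suc i) 0 u)) A n'))"
proof (induction W arbitrary: G A n i)
  case Hole
  then have h: "G = single i {#A#}" "n = 1" by (auto elim: tpVarE)
  show ?case
  proof (rule exI[of _ "{#A#}"], rule exI[of _ emp], intro conjI allI impI)
    show "G = eadd emp (single i {#A#})" using h by simp
  next
    fix D m assume "mtp D u {#A#} m"
    then have "tp D u A m" by (simp add: mtyp_single)
    then have "tp (ins (Suc i) 0 D) (lift (Suc i) 0 u) A m" using lift_tp(1) by blast
    then show "\<exists>n'. n' + size {#A#} = n + m \<and> tp (eadd emp (ins (Suc i) 0 D)) (plugW Hole (lift (depthW Hole + Suc i) 0 u)) A n'"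
      using h by auto
  qed simp
next
  case (AppL W v)
  from AppL.prems obtain G1 M n1 D1 B m1 where h: "G = eadd G1 D1" "n = Suc (n1 + m1)"
    "tp G1 (plugW W (Var (depthW W + i))) (Arr M A) n1" "mtp D1 v (add_mset B M) m1"
    by (auto elim: tpAppE)
  from AppL.IH[OF h(3)] obtain K G01 where k: "K \<noteq> {#}" "G1 = eadd G01 (single i K)"
    "\<And>D m. mtp D u K m \<Longrightarrow> (\<exists>n'. n' + size K = n1 + m \<and>
        tp (eadd G01 (ins (Suc i) 0 D)) (plugW W (lift (depthW W + Suc i) 0 u)) (Arr M A) n')" by blast
  show ?case
  proof (rule exI[of _ K], rule exI[of _ "eadd G01 D1"], intro conjI allI impI)
    show "K \<noteq> {#}" by (rule k(1))
    show "G = eadd (eadd G01 D1) (single i K)" using h(1) k(2) by (auto intro!: ext simp: env_simps add_ac)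
  next
    fix D m assume "mtp D u K m"
    from k(3)[OF this] obtain n' where n': "n' + size K = n1 + m" "tp (eadd G01 (ins (Suc i) 0 D)) (plugW W (lift (depthW W + Suc i) 0 u)) (Arr M A) n'" by blast
    from tp_mtp.tApp[OF n'(2) h(4)]
    have "tp (eadd (eadd G01 (ins (Suc i) 0 D)) D1) (plugW (AppL W v) (lift (depthW (AppL W v) + Suc i) 0 u)) A (Suc (n' + m1))" by simp
    moreover have "eadd (eadd G01 (ins (Suc i) 0 D)) D1 = eadd (eadd G01 D1) (ins (Suc i) 0 D)" by (auto intro!: ext simp: env_simps add_ac)
    moreover have "Suc (n' + m1) + size K = n + m" using n'(1) h(2) by simp
    ultimately show "\<exists>n'. n' + size K = n + m \<and> tp (eadd (eadd G01 D1) (ins (Suc i) 0 D)) (plugW (AppL W v) (lift (depthW (AppL W v) + Suc i) 0 u)) A n'"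
      by metis
  qed
next
  case (AppR v W)
  from AppR.prems obtain G1 M n1 D1 B m1 where h: "G = eadd G1 D1" "n = Suc (n1 + m1)"
    "tp G1 v (Arr M A) n1" "mtp D1 (plugW W (Var (depthW W + i))) (add_mset B M) m1"
    by (auto elim: tpAppE)
  from E_mtp[OF AppR.IH[where i=i] h(4) refl] obtain K G01 where k: "K \<noteq> {#}" "D1 = eadd G01 (single i K)"
    "\<And>D m. mtp D u K m \<Longrightarrow> (\<exists>m'. m' + size K = m1 + m \<and>
        mtp (eadd G01 (ins (Suc i) 0 D)) (plugW W (lift (depthW W + Suc i) 0 u)) (add_mset B M) m')" by auto
  show ?case
  proof (rule exI[of _ K], rule exI[of _ "eadd G1 G01"], intro conjI allI impI)
    show "K \<noteq> {#}" by (rule k(1))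
    show "G = eadd (eadd G1 G01) (single i K)" using h(1) k(2) by (auto intro!: ext simp: env_simps add_ac)
  next
    fix D m assume "mtp D u K m"
    from k(3)[OF this] obtain m' where m': "m' + size K = m1 + m" "mtp (eadd G01 (ins (Suc i) 0 D)) (plugW W (lift (depthW W + Suc i) 0 u)) (add_mset B M) m'" by blast
    from tp_mtp.tApp[OF h(3) m'(2)]
    have "tp (eadd G1 (eadd G01 (ins (Suc i) 0 D))) (plugW (AppR v W) (lift (depthW (AppR v W) + Suc i) 0 u)) A (Suc (n1 + m'))" by simp
    moreover have "eadd G1 (eadd G01 (ins (Suc i) 0 D)) = eadd (eadd G1 G01) (ins (Suc i) 0 D)" by (auto intro!: ext simp: env_simps add_ac)
    moreover have "Suc (n1 + m') + size K = n + m" using m'(1) h(2) by simp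
    ultimately show "\<exists>n'. n' + size K = n + m \<and> tp (eadd (eadd G1 G01) (ins (Suc i) 0 D)) (plugW (AppR v W) (lift (depthW (AppR v W) + Suc i) 0 u)) A n'"
      by metis
  qed
next
  case (SubArg v W)
  from SubArg.prems obtain Gb nb D1 B m1 where h: "G = eadd (shd Gb) D1" "n = Suc (nb + m1)"
    "tp Gb v A nb" "mtp D1 (plugW W (Var (depthW W + i))) (add_mset B (Gb 0)) m1"
    by (auto elim: tpSubE)
  from E_mtp[OF SubArg.IH[where i=i] h(4) refl] obtain K G01 where k: "K \<noteq> {#}" "D1 = eadd G01 (single i K)"
    "\<And>D m. mtp D u K m \<Longrightarrow> (\<exists>m'. m' + size K = m1 + m \<and>
        mtp (eadd G01 (ins (Suc i) 0 D)) (plugW W (lift (depthW W + Suc i) 0 u)) (add_mset B (Gb 0)) m')" by auto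
  show ?case
  proof (rule exI[of _ K], rule exI[of _ "eadd (shd Gb) G01"], intro conjI allI impI)
    show "K \<noteq> {#}" by (rule k(1))
    show "G = eadd (eadd (shd Gb) G01) (single i K)" using h(1) k(2) by (auto intro!: ext simp: env_simps add_ac)
  next
    fix D m assume "mtp D u K m"
    from k(3)[OF this] obtain m' where m': "m' + size K = m1 + m" "mtp (eadd G01 (ins (Suc i) 0 D)) (plugW W (lift (depthW W + Suc i) 0 u)) (add_mset B (Gb 0)) m'" by blast
    from tp_mtp.tSub[OF h(3) m'(2)]
    have "tp (eadd (shd Gb) (eadd G01 (ins (Suc i) 0 D))) (plugW (SubArg v W) (lift (depthW (SubArg v W) + Suc i) 0 u)) A (Suc (nb + m'))" by simp
    moreover have "eadd (shd Gb) (eadd G01 (ins (Suc i) 0 D)) = eadd (eadd (shd Gb) G01) (ins (Suc i) 0 D)" by (auto intro!: ext simp: env_simps add_ac)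
    moreover have "Suc (nb + m') + size K = n + m" using m'(1) h(2) by simp
    ultimately show "\<exists>n'. n' + size K = n + m \<and> tp (eadd (eadd (shd Gb) G01) (ins (Suc i) 0 D)) (plugW (SubArg v W) (lift (depthW (SubArg v W) + Suc i) 0 u)) A n'"
      by metis
  qed
next
  case (SubBody W v)
  from SubBody.prems obtain Gb nb D1 B m1 where h: "G = eadd (shd Gb) D1" "n = Suc (nb + m1)"
    "tp Gb (plugW W (Var (depthW W + Suc i))) A nb" "mtp D1 v (add_mset B (Gb 0)) m1"
    by (auto elim: tpSubE)
  from SubBody.IH[OF h(3)] obtain K G0b where k: "K \<noteq> {#}" "Gb = eadd G0b (single (Suc i) K)"
    "\<And>D m. mtp D u K m \<Longrightarrow> (\<exists>n'. n' + size K = nb + m \<and>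
        tp (eadd G0b (ins (Suc (Suc i)) 0 D)) (plugW W (lift (depthW W + Suc (Suc i)) 0 u)) A n')" by blast
  show ?case
  proof (rule exI[of _ K], rule exI[of _ "eadd (shd G0b) D1"], intro conjI allI impI)
    show "K \<noteq> {#}" by (rule k(1))
    show "G = eadd (eadd (shd G0b) D1) (single i K)" using h(1) k(2) by (auto intro!: ext simp: env_simps add_ac)
  next
    fix D m assume "mtp D u K m"
    from k(3)[OF this] obtain n' where n': "n' + size K = nb + m" "tp (eadd G0b (ins (Suc (Suc i)) 0 D)) (plugW W (lift (depthW W + Suc (Suc i)) 0 u)) A n'" by blast
    have "(eadd G0b (ins (Suc (Suc i)) 0 D)) 0 = Gb 0" using k(2) by (simp add: env_simps)
    with h(4) have "mtp D1 v (add_mset B ((eadd G0b (ins (Suc (Suc i)) 0 D)) 0)) m1" by simp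
    from tp_mtp.tSub[OF n'(2) this]
    have "tp (eadd (shd (eadd G0b (ins (Suc (Suc i)) 0 D))) D1) (plugW (SubBody W v) (lift (depthW (SubBody W v) + Suc i) 0 u)) A (Suc (n' + m1))" by simp
    moreover have "eadd (shd (eadd G0b (ins (Suc (Suc i)) 0 D))) D1 = eadd (eadd (shd G0b) D1) (ins (Suc i) 0 D)" by (auto intro!: ext simp: env_simps add_ac)
    moreover have "Suc (n' + m1) + size K = n + m" using n'(1) h(2) by simp
    ultimately show "\<exists>n'. n' + size K = n + m \<and> tp (eadd (eadd (shd G0b) D1) (ins (Suc i) 0 D)) (plugW (SubBody W v) (lift (depthW (SubBody W v) + Suc i) 0 u)) A n'"
      by metis
  qed
qed

lemma single_empty[simp]: "single i {#} = emp" by (auto intro!: ext simp: env_simps)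

lemma E'_mtp:
  assumes IH: "\<forall>G A n. tp G s' A n \<longrightarrow> (\<exists>K G0 D m n'. G = eadd G0 (ins (Suc i) 0 D) \<and> mtp D u K m \<and> tp (eadd G0 (single i K)) s A n')"
  shows "mtp Dd s0 M mm \<Longrightarrow> s0 = s' \<Longrightarrow> \<exists>K G0 D m m'. Dd = eadd G0 (ins (Suc i) 0 D) \<and> mtp D u K m \<and> mtp (eadd G0 (single i K)) s M m'"
proof (induction rule: mtp_induct)
  case (mNil u0)
  show ?case
    apply (rule exI[of _ "{#}"], rule exI[of _ emp], rule exI[of _ emp], rule exI[of _ 0], rule exI[of _ 0])
    using tp_mtp.mNil by simp
next
  case (mCons G s0 A n D M m)
  from IH mCons.hyps(1) mCons.prems obtain K1 G01 D1 m1 n1 where a: "G = eadd G01 (ins (Suc i) 0 D1)" "mtp D1 u K1 m1" "tp (eadd G01 (single i K1)) s A n1" by blast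
  from mCons.IH mCons.prems obtain K2 G02 D2 m2 m2' where b: "D = eadd G02 (ins (Suc i) 0 D2)" "mtp D2 u K2 m2" "mtp (eadd G02 (single i K2)) s M m2'" by blast
  have "eadd G D = eadd (eadd G01 G02) (ins (Suc i) 0 (eadd D1 D2))" using a(1) b(1) by (auto intro!: ext simp: env_simps add_ac)
  moreover have "mtp (eadd D1 D2) u (K1 + K2) (m1 + m2)" by (rule mtyp_merge[OF a(2) b(2)])
  moreover have "mtp (eadd (eadd G01 G02) (single i (K1 + K2))) s (add_mset A M) (n1 + m2')"
  proof -
    have "mtp (eadd (eadd G01 (single i K1)) (eadd G02 (single i K2))) s (add_mset A M) (n1 + m2')"
      by (rule tp_mtp.mCons[OF a(3) b(3)])
    moreover have "eadd (eadd G01 (single i K1)) (eadd G02 (single i K2)) = eadd (eadd G01 G02) (single i (K1 + K2))"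
      by (auto intro!: ext simp: env_simps add_ac)
    ultimately show ?thesis by simp
  qed
  ultimately show ?case by blast
qed

lemma E'_tp:
  "tp G (plugW W (lift (depthW W + Suc i) 0 u)) A n \<Longrightarrow> \<exists>K G0 D m n'. G = eadd G0 (ins (Suc i) 0 D) \<and> mtp D u K m \<and>
      tp (eadd G0 (single i K)) (plugW W (Var (depthW W + i))) A n'"
proof (induction W arbitrary: G A n i)
  case Hole
  then have "tp G (lift (Suc i) 0 u) A n" by simp
  from unlift_tp(1)[OF this] obtain D where d: "G = ins (Suc i) 0 D" "tp D u A n" by blast
  show ?case
    apply (rule exI[of _ "{#A#}"], rule exI[of _ emp], rule exI[of _ D], rule exI[of _ n], rule exI[of _ 1])
    using d tVar'[of i A] by (simp add: mtyp_single)
next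
  case (AppL W v)
  from AppL.prems obtain G1 M n1 D1 B m1 where h: "G = eadd G1 D1"
    "tp G1 (plugW W (lift (depthW W + Suc i) 0 u)) (Arr M A) n1" "mtp D1 v (add_mset B M) m1"
    by (auto elim: tpAppE)
  from AppL.IH[OF h(2)] obtain K G0 D m n' where k: "G1 = eadd G0 (ins (Suc i) 0 D)" "mtp D u K m"
    "tp (eadd G0 (single i K)) (plugW W (Var (depthW W + i))) (Arr M A) n'" by blast
  from tp_mtp.tApp[OF k(3) h(3)]
  have "tp (eadd (eadd G0 (single i K)) D1) (plugW (AppL W v) (Var (depthW (AppL W v) + i))) A (Suc (n' + m1))" by simp
  moreover have "eadd (eadd G0 (single i K)) D1 = eadd (eadd G0 D1) (single i K)" by (auto intro!: ext simp: env_simps add_ac)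
  moreover have "G = eadd (eadd G0 D1) (ins (Suc i) 0 D)" using h(1) k(1) by (auto intro!: ext simp: env_simps add_ac)
  ultimately show ?case using k(2) by metis
next
  case (AppR v W)
  from AppR.prems obtain G1 M n1 D1 B m1 where h: "G = eadd G1 D1"
    "tp G1 v (Arr M A) n1" "mtp D1 (plugW W (lift (depthW W + Suc i) 0 u)) (add_mset B M) m1"
    by (auto elim: tpAppE)
  have ih: "\<forall>G A n. tp G (plugW W (lift (depthW W + Suc i) 0 u)) A n \<longrightarrow> (\<exists>K G0 D m n'. G = eadd G0 (ins (Suc i) 0 D) \<and> mtp D u K m \<and> tp (eadd G0 (single i K)) (plugW W (Var (depthW W + i))) A n')"
    using AppR.IH by blast
  from E'_mtp[OF ih h(3) refl] obtain K G0 D m m' where k: "D1 = eadd G0 (ins (Suc i) 0 D)" "mtp D u K m"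
    "mtp (eadd G0 (single i K)) (plugW W (Var (depthW W + i))) (add_mset B M) m'" by blast
  from tp_mtp.tApp[OF h(2) k(3)]
  have "tp (eadd G1 (eadd G0 (single i K))) (plugW (AppR v W) (Var (depthW (AppR v W) + i))) A (Suc (n1 + m'))" by simp
  moreover have "eadd G1 (eadd G0 (single i K)) = eadd (eadd G1 G0) (single i K)" by (auto intro!: ext simp: env_simps add_ac)
  moreover have "G = eadd (eadd G1 G0) (ins (Suc i) 0 D)" using h(1) k(1) by (auto intro!: ext simp: env_simps add_ac)
  ultimately show ?case using k(2) by metis
next
  case (SubArg v W)
  from SubArg.prems obtain Gb nb D1 B m1 where h: "G = eadd (shd Gb) D1"
    "tp Gb v A nb" "mtp D1 (plugW W (lift (depthW W + Suc i) 0 u)) (add_mset B (Gb 0)) m1"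
    by (auto elim: tpSubE)
  have ih: "\<forall>G A n. tp G (plugW W (lift (depthW W + Suc i) 0 u)) A n \<longrightarrow> (\<exists>K G0 D m n'. G = eadd G0 (ins (Suc i) 0 D) \<and> mtp D u K m \<and> tp (eadd G0 (single i K)) (plugW W (Var (depthW W + i))) A n')"
    using SubArg.IH by blast
  from E'_mtp[OF ih h(3) refl] obtain K G0 D m m' where k: "D1 = eadd G0 (ins (Suc i) 0 D)" "mtp D u K m"
    "mtp (eadd G0 (single i K)) (plugW W (Var (depthW W + i))) (add_mset B (Gb 0)) m'" by blast
  from tp_mtp.tSub[OF h(2) k(3)]
  have "tp (eadd (shd Gb) (eadd G0 (single i K))) (plugW (SubArg v W) (Var (depthW (SubArg v W) + i))) A (Suc (nb + m'))" by simp
  moreover have "eadd (shd Gb) (eadd G0 (single i K)) = eadd (eadd (shd Gb) G0) (single i K)" by (auto intro!: ext simp: env_simps add_ac)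
  moreover have "G = eadd (eadd (shd Gb) G0) (ins (Suc i) 0 D)" using h(1) k(1) by (auto intro!: ext simp: env_simps add_ac)
  ultimately show ?case using k(2) by metis
next
  case (SubBody W v)
  from SubBody.prems obtain Gb nb D1 B m1 where h: "G = eadd (shd Gb) D1"
    "tp Gb (plugW W (lift (depthW W + Suc (Suc i)) 0 u)) A nb" "mtp D1 v (add_mset B (Gb 0)) m1"
    by (auto elim: tpSubE)
  from SubBody.IH[OF h(2)] obtain K G0 D m n' where k: "Gb = eadd G0 (ins (Suc (Suc i)) 0 D)" "mtp D u K m"
    "tp (eadd G0 (single (Suc i) K)) (plugW W (Var (depthW W + Suc i))) A n'" by blast
  have "(eadd G0 (single (Suc i) K)) 0 = Gb 0" using k(1) by (simp add: env_simps)
  with h(3) have "mtp D1 v (add_mset B ((eadd G0 (single (Suc i) K)) 0)) m1" by simp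
  from tp_mtp.tSub[OF k(3) this]
  have "tp (eadd (shd (eadd G0 (single (Suc i) K))) D1) (plugW (SubBody W v) (Var (depthW (SubBody W v) + i))) A (Suc (n' + m1))" by simp
  moreover have "eadd (shd (eadd G0 (single (Suc i) K))) D1 = eadd (eadd (shd G0) D1) (single i K)" by (auto intro!: ext simp: env_simps add_ac)
  moreover have "G = eadd (eadd (shd G0) D1) (ins (Suc i) 0 D)" using h(1) k(1) by (auto intro!: ext simp: env_simps add_ac Suc_diff_le)
  ultimately show ?case using k(2) by metis
qed

lemma SR_m: "tp G (App (plugS S (Lam t)) u) A n \<Longrightarrow> \<exists>n'. n' < n \<and> tp G (plugS S (Sub t (lift (length S) 0 u))) A n'"
proof -
  assume "tp G (App (plugS S (Lam t)) u) A n"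
  then obtain G1 M n1 D B m where h: "G = eadd G1 D" "n = Suc (n1 + m)" "tp G1 (plugS S (Lam t)) (Arr M A) n1" "mtp D u (add_mset B M) m"
    by (auto elim: tpAppE)
  define k where "k = length S"
  from plugS_tp[OF h(3)] obtain Gs ns Ds where p: "tp Gs (Lam t) (Arr M A) ns" "G1 = eadd (dropenv k Gs) Ds" "ns \<le> n1"
    "\<And>s' Gs' ns' C'. tp Gs' s' C' ns' \<Longrightarrow> (\<forall>j<k. Gs' j = Gs j) \<Longrightarrow> tp (eadd (dropenv k Gs') Ds) (plugS S s') C' (n1 - ns + ns')"
    unfolding k_def by blast
  from p(1) obtain Gt nt where l: "Gs = shd Gt" "M = Gt 0" "ns = Suc nt" "tp Gt t A nt"
    by (auto elim: tpLamE)
  have "mtp (ins k 0 D) (lift k 0 u) (add_mset B (Gt 0)) m" using lift_tp(2)[OF h(4)] l(2) by blast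
  from tp_mtp.tSub[OF l(4) this] have st: "tp (eadd (shd Gt) (ins k 0 D)) (Sub t (lift k 0 u)) A (Suc (nt + m))" .
  have "\<forall>j<k. (eadd (shd Gt) (ins k 0 D)) j = Gs j" using l(1) by (simp add: env_simps)
  from p(4)[OF st this] have r: "tp (eadd (dropenv k (eadd (shd Gt) (ins k 0 D))) Ds) (plugS S (Sub t (lift k 0 u))) A (n1 - ns + Suc (nt + m))" .
  have "eadd (dropenv k (eadd (shd Gt) (ins k 0 D))) Ds = G" using h(1) p(2) l(1) by (auto intro!: ext simp: env_simps add_ac)
  moreover have "n1 - ns + Suc (nt + m) < n" using h(2) l(3) p(3) by simp
  ultimately show ?thesis using r k_def by auto
qed

lemma SR_e: "tp G (Sub (plugW W (Var (depthW W))) u) A n \<Longrightarrow> \<exists>n'. n' < n \<and> tp G (Sub (plugW W (lift (Suc (depthW W)) 0 u)) u) A n'"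
proof -
  assume "tp G (Sub (plugW W (Var (depthW W))) u) A n"
  then obtain Gb nb D B m where h: "G = eadd (shd Gb) D" "n = Suc (nb + m)" "tp Gb (plugW W (Var (depthW W + 0))) A nb" "mtp D u (add_mset B (Gb 0)) m"
    by (auto elim: tpSubE)
  from E_tp[OF h(3), of u] obtain K G0 where e: "K \<noteq> {#}" "Gb = eadd G0 (single 0 K)"
    "\<And>D m. mtp D u K m \<Longrightarrow> \<exists>n'. n' + size K = nb + m \<and> tp (eadd G0 (ins (Suc 0) 0 D)) (plugW W (lift (depthW W + Suc 0) 0 u)) A n'"
    by blast
  have "add_mset B (Gb 0) = K + add_mset B (G0 0)" using e(2) by (simp add: env_simps)
  from mtyp_split[OF h(4) this] obtain D1 D2 m1 m2 where d: "D = eadd D1 D2" "m = m1 + m2" "mtp D1 u K m1" "mtp D2 u (add_mset B (G0 0)) m2" by blast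
  from e(3)[OF d(3)] obtain n' where n': "n' + size K = nb + m1" "tp (eadd G0 (ins (Suc 0) 0 D1)) (plugW W (lift (depthW W + Suc 0) 0 u)) A n'" by blast
  have "(eadd G0 (ins (Suc 0) 0 D1)) 0 = G0 0" by (simp add: env_simps)
  with d(4) have "mtp D2 u (add_mset B ((eadd G0 (ins (Suc 0) 0 D1)) 0)) m2" by simp
  from tp_mtp.tSub[OF n'(2) this] have r: "tp (eadd (shd (eadd G0 (ins (Suc 0) 0 D1))) D2) (Sub (plugW W (lift (Suc (depthW W)) 0 u)) u) A (Suc (n' + m2))" by simp
  have "eadd (shd (eadd G0 (ins (Suc 0) 0 D1))) D2 = G" using h(1) e(2) d(1) by (auto intro!: ext simp: env_simps add_ac)
  moreover have "Suc (n' + m2) < n" using n'(1) h(2) d(2) e(1) by (simp add: nonempty_has_size)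
  ultimately show ?thesis using r by auto
qed

lemma SR_gc: "tp G (Sub (lift 1 0 t) (plugS S (Lam s))) A n \<Longrightarrow> \<exists>G' n'. n' < n \<and> ele G' G \<and> tp G' (plugS S (lift (length S) 0 t)) A n'"
proof -
  assume "tp G (Sub (lift 1 0 t) (plugS S (Lam s))) A n"
  then obtain Gb nb D B m where h: "G = eadd (shd Gb) D" "n = Suc (nb + m)" "tp Gb (lift 1 0 t) A nb" "mtp D (plugS S (Lam s)) (add_mset B (Gb 0)) m"
    by (auto elim: tpSubE)
  from unlift_tp(1)[OF h(3)] obtain Gt where g: "Gb = ins 1 0 Gt" "tp Gt t A nb" by blast
  from h(4) g(1) have pl: "tp D (plugS S (Lam s)) B m" by (simp add: env_simps mtyp_single)
  define k where "k = length S"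
  from plugS_tp[OF pl] obtain Gs ns Ds where p: "D = eadd (dropenv k Gs) Ds"
    "\<And>s' Gs' ns' C'. tp Gs' s' C' ns' \<Longrightarrow> (\<forall>j<k. Gs' j \<subseteq># Gs j) \<Longrightarrow>
        (\<exists>G'' n''. tp G'' (plugS S s') C' n'' \<and> ele G'' (eadd (dropenv k Gs') Ds) \<and> n'' + ns \<le> m + ns')"
    unfolding k_def by blast
  have lt: "tp (ins k 0 Gt) (lift k 0 t) A nb" using lift_tp(1)[OF g(2)] by blast
  have "\<forall>j<k. ins k 0 Gt j \<subseteq># Gs j" by (simp add: env_simps)
  from p(2)[OF lt this] obtain G'' n'' where r: "tp G'' (plugS S (lift k 0 t)) A n''" "ele G'' (eadd (dropenv k (ins k 0 Gt)) Ds)" "n'' + ns \<le> m + nb" by blast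
  have "ele (eadd (dropenv k (ins k 0 Gt)) Ds) G" using h(1) g(1) p(1) unfolding ele_def by (simp add: env_simps)
  with r(2) have "ele G'' G" by (rule ele_trans)
  moreover have "n'' < n" using r(3) h(2) by simp
  ultimately show ?thesis using r(1) k_def by auto
qed

lemma SE_m: "tp G (plugS S (Sub t (lift (length S) 0 u))) A n \<Longrightarrow> \<exists>n'. tp G (App (plugS S (Lam t)) u) A n'"
proof -
  assume a: "tp G (plugS S (Sub t (lift (length S) 0 u))) A n"
  define k where "k = length S"
  from plugS_tp[OF a] obtain Gs ns Ds where p: "tp Gs (Sub t (lift k 0 u)) A ns" "G = eadd (dropenv k Gs) Ds"
    "\<And>s' Gs' ns' C'. tp Gs' s' C' ns' \<Longrightarrow> (\<forall>j<k. Gs' j = Gs j) \<Longrightarrow> tp (eadd (dropenv k Gs') Ds) (plugS S s') C' (n - ns + ns')"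
    unfolding k_def by blast
  from p(1) obtain Gt nt D' B m where h: "Gs = eadd (shd Gt) D'" "tp Gt t A nt" "mtp D' (lift k 0 u) (add_mset B (Gt 0)) m"
    by (auto elim: tpSubE)
  from unlift_tp(2)[OF h(3)] obtain Du where d: "D' = ins k 0 Du" "mtp Du u (add_mset B (Gt 0)) m" by blast
  have lam: "tp (shd Gt) (Lam t) (Arr (Gt 0) A) (Suc nt)" by (rule tp_mtp.tLam[OF h(2)])
  have "\<forall>j<k. shd Gt j = Gs j" using h(1) d(1) by (simp add: env_simps)
  from p(3)[OF lam this] have "tp (eadd (dropenv k (shd Gt)) Ds) (plugS S (Lam t)) (Arr (Gt 0) A) (n - ns + Suc nt)" .
  from tp_mtp.tApp[OF this d(2)] have r: "tp (eadd (eadd (dropenv k (shd Gt)) Ds) Du) (App (plugS S (Lam t)) u) A (Suc (n - ns + Suc nt + m))" .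
  have "eadd (eadd (dropenv k (shd Gt)) Ds) Du = G" using p(2) h(1) d(1) by (auto intro!: ext simp: env_simps add_ac)
  with r show ?thesis by auto
qed

lemma SE_e: "tp G (Sub (plugW W (lift (Suc (depthW W)) 0 u)) u) A n \<Longrightarrow> \<exists>n'. tp G (Sub (plugW W (Var (depthW W))) u) A n'"
proof -
  assume "tp G (Sub (plugW W (lift (Suc (depthW W)) 0 u)) u) A n"
  then obtain Gb nb D2 B m2 where h: "G = eadd (shd Gb) D2" "tp Gb (plugW W (lift (depthW W + Suc 0) 0 u)) A nb" "mtp D2 u (add_mset B (Gb 0)) m2"
    by (auto elim: tpSubE)
  from E'_tp[OF h(2)] obtain K G0 D1 m1 n' where e: "Gb = eadd G0 (ins (Suc 0) 0 D1)" "mtp D1 u K m1"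
    "tp (eadd G0 (single 0 K)) (plugW W (Var (depthW W + 0))) A n'" by blast
  have "Gb 0 = G0 0" using e(1) by (simp add: env_simps)
  from mtyp_merge[OF e(2) h(3)] this have "mtp (eadd D1 D2) u (add_mset B ((eadd G0 (single 0 K)) 0)) (m1 + m2)"
    by (simp add: env_simps add_ac)
  from tp_mtp.tSub[OF e(3) this] have r: "tp (eadd (shd (eadd G0 (single 0 K))) (eadd D1 D2)) (Sub (plugW W (Var (depthW W))) u) A (Suc (n' + (m1 + m2)))" by simp
  have "eadd (shd (eadd G0 (single 0 K))) (eadd D1 D2) = G" using h(1) e(1) by (auto intro!: ext simp: env_simps add_ac)
  with r show ?thesis by auto
qed

lemma SE_gc: "tp G (plugS S (lift (length S) 0 t)) A n \<Longrightarrow> \<exists>n'. tp G (Sub (lift 1 0 t) (plugS S (Lam s))) A n'"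
proof -
  assume a: "tp G (plugS S (lift (length S) 0 t)) A n"
  define k where "k = length S"
  from plugS_tp[OF a] obtain Gs ns Ds where p: "tp Gs (lift k 0 t) A ns" "G = eadd (dropenv k Gs) Ds"
    "\<And>s' Gs' ns' C'. tp Gs' s' C' ns' \<Longrightarrow> (\<forall>j<k. Gs' j = Gs j) \<Longrightarrow> tp (eadd (dropenv k Gs') Ds) (plugS S s') C' (n - ns + ns')"
    unfolding k_def by blast
  from unlift_tp(1)[OF p(1)] obtain Gt where g: "Gs = ins k 0 Gt" "tp Gt t A ns" by blast
  have "\<forall>j<k. emp j = Gs j" using g(1) by (simp add: env_simps)
  from p(3)[OF tp_mtp.tStar[of s] this] have "tp (eadd (dropenv k emp) Ds) (plugS S (Lam s)) Star (n - ns + 0)" .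
  moreover have "eadd (dropenv k emp) Ds = Ds" by (auto intro!: ext simp: env_simps)
  ultimately have "tp Ds (plugS S (Lam s)) Star (n - ns)" by simp
  then have m: "mtp Ds (plugS S (Lam s)) (add_mset Star ((ins 1 0 Gt) 0)) (n - ns)" by (simp add: env_simps mtyp_single)
  have lt: "tp (ins 1 0 Gt) (lift 1 0 t) A ns" using lift_tp(1)[OF g(2)] by blast
  from tp_mtp.tSub[OF lt m] have r: "tp (eadd (shd (ins 1 0 Gt)) Ds) (Sub (lift 1 0 t) (plugS S (Lam s))) A (Suc (ns + (n - ns)))" .
  have "eadd (shd (ins 1 0 Gt)) Ds = G" using p(2) g(1) by (auto intro!: ext simp: env_simps)
  with r show ?thesis by auto
qed

lemma root_SR: "root_step t t' \<Longrightarrow> tp G t A n \<Longrightarrow> \<exists>G' n'. n' < n \<and> ele G' G \<and> tp G' t' A n'"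
proof (induction rule: root_step.cases)
  case (rule_m S t u)
  then show ?case using SR_m ele_refl by blast
next
  case (rule_e W u)
  then show ?case using SR_e ele_refl by blast
next
  case (rule_gcv t S s)
  then show ?case using SR_gc by blast
qed

lemma root_SE: "root_step t t' \<Longrightarrow> tp G t' A n \<Longrightarrow> \<exists>n'. tp G t A n'"
proof (induction rule: root_step.cases)
  case (rule_m S t u)
  then show ?case using SE_m by blast
next
  case (rule_e W u)
  then show ?case using SE_e by blast
next
  case (rule_gcv t S s)
  then show ?case using SE_gc by blast
qed

lemma mtp_SR:
  assumes P: "\<forall>G A n. tp G t A n \<longrightarrow> (\<exists>G' n'. n' < n \<and> ele G' G \<and> tp G' t' A n')"
  shows "mtp D s M m \<Longrightarrow> s = t \<Longrightarrow> \<exists>D' m'. m' \<le> m \<and> (M \<noteq> {#} \<longrightarrow> m' < m) \<and> ele D' D \<and> mtp D' t' M m'"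
proof (induction rule: mtp_induct)
  case (mNil u)
  then show ?case using tp_mtp.mNil ele_refl by blast
next
  case (mCons G s A n D M m)
  from P mCons.hyps(1) mCons.prems obtain G' n' where a: "n' < n" "ele G' G" "tp G' t' A n'" by blast
  from mCons.IH mCons.prems obtain D' m' where b: "m' \<le> m" "ele D' D" "mtp D' t' M m'" by blast
  from tp_mtp.mCons[OF a(3) b(3)] have "mtp (eadd G' D') t' (add_mset A M) (n' + m')" .
  moreover have "ele (eadd G' D') (eadd G D)" by (rule ele_eadd_mono[OF a(2) b(2)])
  moreover have "n' + m' < n + m" using a(1) b(1) by simp
  ultimately show ?case by (meson less_imp_le_nat)
qed

lemma mtp_SE:
  assumes P: "\<forall>G A n. tp G t' A n \<longrightarrow> (\<exists>n'. tp G t A n')"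
  shows "mtp D s M m \<Longrightarrow> s = t' \<Longrightarrow> \<exists>m'. mtp D t M m'"
proof (induction rule: mtp_induct)
  case (mNil u)
  then show ?case using tp_mtp.mNil by blast
next
  case (mCons G s A n D M m)
  from P mCons.hyps(1) mCons.prems obtain n' where a: "tp G t A n'" by blast
  from mCons.IH mCons.prems obtain m' where b: "mtp D t M m'" by blast
  from tp_mtp.mCons[OF a b] show ?case by blast
qed

lemma ctx_SR:
  assumes P: "\<forall>G A n. tp G t A n \<longrightarrow> (\<exists>G' n'. n' < n \<and> ele G' G \<and> tp G' t' A n')"
  shows "\<forall>G A n. tp G (plugW W t) A n \<longrightarrow> (\<exists>G' n'. n' < n \<and> ele G' G \<and> tp G' (plugW W t') A n')"
proof (induction W)
  case Hole
  then show ?case using P by simp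
next
  case (AppL W v)
  show ?case
  proof (intro allI impI)
    fix G A n assume "tp G (plugW (AppL W v) t) A n"
    then obtain G1 M n1 D B m where h: "G = eadd G1 D" "n = Suc (n1 + m)" "tp G1 (plugW W t) (Arr M A) n1" "mtp D v (add_mset B M) m"
      by (auto elim: tpAppE)
    from AppL.IH h(3) obtain G1' n1' where a: "n1' < n1" "ele G1' G1" "tp G1' (plugW W t') (Arr M A) n1'" by blast
    from tp_mtp.tApp[OF a(3) h(4)] have "tp (eadd G1' D) (plugW (AppL W v) t') A (Suc (n1' + m))" by simp
    moreover have "ele (eadd G1' D) G" using h(1) ele_eadd_mono[OF a(2) ele_refl] by simp
    moreover have "Suc (n1' + m) < n" using a(1) h(2) by simp
    ultimately show "\<exists>G' n'. n' < n \<and> ele G' G \<and> tp G' (plugW (AppL W v) t') A n'" by blast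
  qed
next
  case (AppR v W)
  show ?case
  proof (intro allI impI)
    fix G A n assume "tp G (plugW (AppR v W) t) A n"
    then obtain G1 M n1 D B m where h: "G = eadd G1 D" "n = Suc (n1 + m)" "tp G1 v (Arr M A) n1" "mtp D (plugW W t) (add_mset B M) m"
      by (auto elim: tpAppE)
    from mtp_SR[OF AppR.IH h(4) refl] obtain D' m' where a: "m' < m" "ele D' D" "mtp D' (plugW W t') (add_mset B M) m'" by auto
    from tp_mtp.tApp[OF h(3) a(3)] have "tp (eadd G1 D') (plugW (AppR v W) t') A (Suc (n1 + m'))" by simp
    moreover have "ele (eadd G1 D') G" using h(1) ele_eadd_mono[OF ele_refl a(2)] by simp
    moreover have "Suc (n1 + m') < n" using a(1) h(2) by simp
    ultimately show "\<exists>G' n'. n' < n \<and> ele G' G \<and> tp G' (plugW (AppR v W) t') A n'" by blast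
  qed
next
  case (SubArg v W)
  show ?case
  proof (intro allI impI)
    fix G A n assume "tp G (plugW (SubArg v W) t) A n"
    then obtain Gb nb D B m where h: "G = eadd (shd Gb) D" "n = Suc (nb + m)" "tp Gb v A nb" "mtp D (plugW W t) (add_mset B (Gb 0)) m"
      by (auto elim: tpSubE)
    from mtp_SR[OF SubArg.IH h(4) refl] obtain D' m' where a: "m' < m" "ele D' D" "mtp D' (plugW W t') (add_mset B (Gb 0)) m'" by auto
    from tp_mtp.tSub[OF h(3) a(3)] have "tp (eadd (shd Gb) D') (plugW (SubArg v W) t') A (Suc (nb + m'))" by simp
    moreover have "ele (eadd (shd Gb) D') G" using h(1) ele_eadd_mono[OF ele_refl a(2)] by simp
    moreover have "Suc (nb + m') < n" using a(1) h(2) by simp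
    ultimately show "\<exists>G' n'. n' < n \<and> ele G' G \<and> tp G' (plugW (SubArg v W) t') A n'" by blast
  qed
next
  case (SubBody W v)
  show ?case
  proof (intro allI impI)
    fix G A n assume "tp G (plugW (SubBody W v) t) A n"
    then obtain Gb nb D B m where h: "G = eadd (shd Gb) D" "n = Suc (nb + m)" "tp Gb (plugW W t) A nb" "mtp D v (add_mset B (Gb 0)) m"
      by (auto elim: tpSubE)
    from SubBody.IH h(3) obtain Gb' nb' where a: "nb' < nb" "ele Gb' Gb" "tp Gb' (plugW W t') A nb'" by blast
    have "add_mset B (Gb' 0) \<subseteq># add_mset B (Gb 0)" using a(2) by (simp add: ele_def)
    from mtp_sub[OF h(4) this] obtain D' m' where d: "mtp D' v (add_mset B (Gb' 0)) m'" "ele D' D" "m' \<le> m" by blast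
    from tp_mtp.tSub[OF a(3) d(1)] have "tp (eadd (shd Gb') D') (plugW (SubBody W v) t') A (Suc (nb' + m'))" by simp
    moreover have "ele (eadd (shd Gb') D') G" using h(1) ele_eadd_mono[OF ele_shd[OF a(2)] d(2)] by simp
    moreover have "Suc (nb' + m') < n" using a(1) d(3) h(2) by simp
    ultimately show "\<exists>G' n'. n' < n \<and> ele G' G \<and> tp G' (plugW (SubBody W v) t') A n'" by blast
  qed
qed

lemma ctx_SE:
  assumes P: "\<forall>G A n. tp G t' A n \<longrightarrow> (\<exists>n'. tp G t A n')"
  shows "\<forall>G A n. tp G (plugW W t') A n \<longrightarrow> (\<exists>n'. tp G (plugW W t) A n')"
proof (induction W)
  case Hole
  then show ?case using P by simp
next
  case (AppL W v)
  show ?case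
  proof (intro allI impI)
    fix G A n assume "tp G (plugW (AppL W v) t') A n"
    then obtain G1 M n1 D B m where h: "G = eadd G1 D" "tp G1 (plugW W t') (Arr M A) n1" "mtp D v (add_mset B M) m"
      by (auto elim: tpAppE)
    from AppL.IH h(2) obtain n1' where a: "tp G1 (plugW W t) (Arr M A) n1'" by blast
    from tp_mtp.tApp[OF a h(3)] h(1) show "\<exists>n'. tp G (plugW (AppL W v) t) A n'" by auto
  qed
next
  case (AppR v W)
  show ?case
  proof (intro allI impI)
    fix G A n assume "tp G (plugW (AppR v W) t') A n"
    then obtain G1 M n1 D B m where h: "G = eadd G1 D" "tp G1 v (Arr M A) n1" "mtp D (plugW W t') (add_mset B M) m"
      by (auto elim: tpAppE)
    from mtp_SE[OF AppR.IH h(3) refl] obtain m' where a: "mtp D (plugW W t) (add_mset B M) m'" by auto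
    from tp_mtp.tApp[OF h(2) a] h(1) show "\<exists>n'. tp G (plugW (AppR v W) t) A n'" by auto
  qed
next
  case (SubArg v W)
  show ?case
  proof (intro allI impI)
    fix G A n assume "tp G (plugW (SubArg v W) t') A n"
    then obtain Gb nb D B m where h: "G = eadd (shd Gb) D" "tp Gb v A nb" "mtp D (plugW W t') (add_mset B (Gb 0)) m"
      by (auto elim: tpSubE)
    from mtp_SE[OF SubArg.IH h(3) refl] obtain m' where a: "mtp D (plugW W t) (add_mset B (Gb 0)) m'" by auto
    from tp_mtp.tSub[OF h(2) a] h(1) show "\<exists>n'. tp G (plugW (SubArg v W) t) A n'" by auto
  qed
next
  case (SubBody W v)
  show ?case
  proof (intro allI impI)
    fix G A n assume "tp G (plugW (SubBody W v) t') A n"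
    then obtain Gb nb D B m where h: "G = eadd (shd Gb) D" "tp Gb (plugW W t') A nb" "mtp D v (add_mset B (Gb 0)) m"
      by (auto elim: tpSubE)
    from SubBody.IH h(2) obtain nb' where a: "tp Gb (plugW W t) A nb'" by blast
    from tp_mtp.tSub[OF a h(3)] h(1) show "\<exists>n'. tp G (plugW (SubBody W v) t) A n'" by auto
  qed
qed

lemma wstep_SR: "wstep x y \<Longrightarrow> tp G x A n \<Longrightarrow> \<exists>G' n'. n' < n \<and> tp G' y A n'"
proof (induction rule: wstep.cases)
  case (1 t u W)
  have "\<forall>G A n. tp G t A n \<longrightarrow> (\<exists>G' n'. n' < n \<and> ele G' G \<and> tp G' u A n')" using root_SR[OF 1(3)] by blast
  from ctx_SR[OF this, of W] 1 show ?case by blast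
qed

lemma wstep_SE: "wstep x y \<Longrightarrow> tp G y A n \<Longrightarrow> \<exists>n'. tp G x A n'"
proof (induction rule: wstep.cases)
  case (1 t u W)
  have "\<forall>G A n. tp G u A n \<longrightarrow> (\<exists>n'. tp G t A n')" using root_SE[OF 1(3)] by blast
  from ctx_SE[OF this, of W] 1 show ?case by blast
qed

fun wocc :: "nat \<Rightarrow> trm \<Rightarrow> bool" where
  "wocc i (Var j) = (i = j)"
| "wocc i (Lam t) = False"
| "wocc i (App t u) = (wocc i t \<or> wocc i u)"
| "wocc i (Sub t u) = (wocc (Suc i) t \<or> wocc i u)"

definition isans :: "trm \<Rightarrow> bool" where "isans t \<longleftrightarrow> (\<exists>S s. t = plugS S (Lam s))"

lemma wocc_plugW: "wocc i t \<Longrightarrow> \<exists>W. t = plugW W (Var (depthW W + i))"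
proof (induction t arbitrary: i)
  case (Var j) then show ?case by (intro exI[of _ Hole]) simp
next
  case (Lam t) then show ?case by simp
next
  case (App t u)
  then show ?case
  proof (cases "wocc i t")
    case True
    with App.IH(1) obtain W where "t = plugW W (Var (depthW W + i))" by blast
    then show ?thesis by (intro exI[of _ "AppL W u"]) simp
  next
    case False
    with App.prems have "wocc i u" by simp
    with App.IH(2) obtain W where "u = plugW W (Var (depthW W + i))" by blast
    then show ?thesis by (intro exI[of _ "AppR t W"]) simp
  qed
next
  case (Sub t u)
  then show ?case
  proof (cases "wocc (Suc i) t")
    case True
    with Sub.IH(1) obtain W where "t = plugW W (Var (depthW W + Suc i))" by blast
    then show ?thesis by (intro exI[of _ "SubBody W u"]) simp
  next
    case False
    with Sub.prems have "wocc i u" by simp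
    with Sub.IH(2) obtain W where "u = plugW W (Var (depthW W + i))" by blast
    then show ?thesis by (intro exI[of _ "SubArg t W"]) simp
  qed
qed

lemma wstep_ctx:
  assumes "wstep a b"
  shows "wstep (App a v) (App b v)" "wstep (App v a) (App v b)" "wstep (Sub v a) (Sub v b)" "wstep (Sub a v) (Sub b v)"
proof -
  from assms obtain t u W where h: "a = plugW W t" "b = plugW W u" "root_step t u" by (auto elim: wstep.cases)
  show "wstep (App a v) (App b v)" using wstep.intros[OF h(3), of "AppL W v"] h by simp
  show "wstep (App v a) (App v b)" using wstep.intros[OF h(3), of "AppR v W"] h by simp
  show "wstep (Sub v a) (Sub v b)" using wstep.intros[OF h(3), of "SubArg v W"] h by simp
  show "wstep (Sub a v) (Sub b v)" using wstep.intros[OF h(3), of "SubBody W v"] h by simp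
qed

lemma root_wstep: "root_step a b \<Longrightarrow> wstep a b" using wstep.intros[of a b Hole] by simp

lemma normal_App: "normal_w (App a b) \<Longrightarrow> normal_w a \<and> normal_w b \<and> \<not> isans a"
proof (intro conjI)
  assume n: "normal_w (App a b)"
  then show "normal_w a" unfolding normal_w_def using wstep_ctx(1) by blast
  from n show "normal_w b" unfolding normal_w_def using wstep_ctx(2) by blast
  show "\<not> isans a"
  proof
    assume "isans a"
    then obtain S s where "a = plugS S (Lam s)" unfolding isans_def by blast
    with root_step.rule_m[of S s b] have "wstep (App a b) (plugS S (Sub s (lift (length S) 0 b)))" by (simp add: root_wstep)
    with n show False unfolding normal_w_def by blast
  qed
qed

lemma normal_Sub: "normal_w (Sub a b) \<Longrightarrow> normal_w a \<and> normal_w b \<and> \<not> wocc 0 a"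
proof (intro conjI)
  assume n: "normal_w (Sub a b)"
  then show "normal_w a" unfolding normal_w_def using wstep_ctx(4) by blast
  from n show "normal_w b" unfolding normal_w_def using wstep_ctx(3) by blast
  show "\<not> wocc 0 a"
  proof
    assume "wocc 0 a"
    from wocc_plugW[OF this] obtain W where "a = plugW W (Var (depthW W))" by auto
    with root_step.rule_e[of W b] n show False unfolding normal_w_def using root_wstep by blast
  qed
qed

lemma isans_Sub: "isans a \<Longrightarrow> isans (Sub a b)"
proof -
  assume "isans a"
  then obtain S s where "a = plugS S (Lam s)" unfolding isans_def by blast
  then have "Sub a b = plugS (b # S) (Lam s)" by simp
  then show ?thesis unfolding isans_def by blast
qed

lemma not_isans_App: "\<not> isans (App a b)"
proof
  assume "isans (App a b)"
  then obtain S s where "App a b = plugS S (Lam s)" unfolding isans_def by blast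
  then show False by (cases S) auto
qed

lemma not_isans_Var: "\<not> isans (Var i)"
proof
  assume "isans (Var i)"
  then obtain S s where "Var i = plugS S (Lam s)" unfolding isans_def by blast
  then show False by (cases S) auto
qed

lemma NF_tp: "normal_w t \<Longrightarrow> (\<exists>G n. tp G t Star n \<and> (\<forall>j. G j \<noteq> {#} \<longrightarrow> wocc j t)) \<and>
   (\<not> isans t \<longrightarrow> (\<forall>A. \<exists>G n. tp G t A n \<and> (\<forall>j. G j \<noteq> {#} \<longrightarrow> wocc j t)))"
proof (induction t)
  case (Var i)
  have "\<forall>A. \<exists>G n. tp G (Var i) A n \<and> (\<forall>j. G j \<noteq> {#} \<longrightarrow> wocc j (Var i))"
  proof
    fix A
    have "\<forall>j. single i {#A#} j \<noteq> {#} \<longrightarrow> wocc j (Var i)" by (simp add: env_simps)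
    with tp_mtp.tVar[of i A] show "\<exists>G n. tp G (Var i) A n \<and> (\<forall>j. G j \<noteq> {#} \<longrightarrow> wocc j (Var i))" by blast
  qed
  then show ?case by blast
next
  case (Lam s)
  have "tp emp (Lam s) Star 0" by (rule tp_mtp.tStar)
  moreover have "isans (Lam s)" unfolding isans_def by (rule exI[of _ "[]"]) simp
  ultimately show ?case by (auto simp: env_simps)
next
  case (App a b)
  from normal_App[OF App.prems] have h: "normal_w a" "normal_w b" "\<not> isans a" by auto
  from App.IH(2)[OF h(2)] obtain Gb nb where b: "tp Gb b Star nb" "\<forall>j. Gb j \<noteq> {#} \<longrightarrow> wocc j b" by blast
  have mb: "mtp Gb b (add_mset Star {#}) nb" using b(1) by (simp add: mtyp_single)
  have all: "\<forall>A. \<exists>G n. tp G (App a b) A n \<and> (\<forall>j. G j \<noteq> {#} \<longrightarrow> wocc j (App a b))"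
  proof
    fix A
    from App.IH(1)[OF h(1)] h(3) obtain Ga na where a: "tp Ga a (Arr {#} A) na" "\<forall>j. Ga j \<noteq> {#} \<longrightarrow> wocc j a" by blast
    from tp_mtp.tApp[OF a(1) mb] have "tp (eadd Ga Gb) (App a b) A (Suc (na + nb))" .
    moreover have "\<forall>j. (eadd Ga Gb) j \<noteq> {#} \<longrightarrow> wocc j (App a b)" using a(2) b(2) by (auto simp: env_simps)
    ultimately show "\<exists>G n. tp G (App a b) A n \<and> (\<forall>j. G j \<noteq> {#} \<longrightarrow> wocc j (App a b))" by blast
  qed
  then show ?case by blast
next
  case (Sub a b)
  from normal_Sub[OF Sub.prems] have h: "normal_w a" "normal_w b" "\<not> wocc 0 a" by auto
  from Sub.IH(2)[OF h(2)] obtain Gb nb where b: "tp Gb b Star nb" "\<forall>j. Gb j \<noteq> {#} \<longrightarrow> wocc j b" by blast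
  have mb: "mtp Gb b (add_mset Star {#}) nb" using b(1) by (simp add: mtyp_single)
  have gen: "\<exists>G n. tp G (Sub a b) A n \<and> (\<forall>j. G j \<noteq> {#} \<longrightarrow> wocc j (Sub a b))"
    if a: "tp Ga a A na" "\<forall>j. Ga j \<noteq> {#} \<longrightarrow> wocc j a" for Ga A na
  proof -
    have "Ga 0 = {#}" using a(2) h(3) by blast
    with mb have "mtp Gb b (add_mset Star (Ga 0)) nb" by simp
    from tp_mtp.tSub[OF a(1) this] have "tp (eadd (shd Ga) Gb) (Sub a b) A (Suc (na + nb))" .
    moreover have "\<forall>j. (eadd (shd Ga) Gb) j \<noteq> {#} \<longrightarrow> wocc j (Sub a b)" using a(2) b(2) by (auto simp: env_simps)
    ultimately show ?thesis by blast
  qed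
  from Sub.IH(1)[OF h(1)] obtain Ga na where "tp Ga a Star na" "\<forall>j. Ga j \<noteq> {#} \<longrightarrow> wocc j a" by blast
  from gen[OF this] have c1: "\<exists>G n. tp G (Sub a b) Star n \<and> (\<forall>j. G j \<noteq> {#} \<longrightarrow> wocc j (Sub a b))" .
  have c2: "\<not> isans (Sub a b) \<longrightarrow> (\<forall>A. \<exists>G n. tp G (Sub a b) A n \<and> (\<forall>j. G j \<noteq> {#} \<longrightarrow> wocc j (Sub a b)))"
  proof (intro impI allI)
    fix A assume "\<not> isans (Sub a b)"
    then have "\<not> isans a" using isans_Sub by blast
    with Sub.IH(1)[OF h(1)] obtain Ga na where "tp Ga a A na" "\<forall>j. Ga j \<noteq> {#} \<longrightarrow> wocc j a" by blast
    from gen[OF this] show "\<exists>G n. tp G (Sub a b) A n \<and> (\<forall>j. G j \<noteq> {#} \<longrightarrow> wocc j (Sub a b))" .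
  qed
  from c1 c2 show ?case by blast
qed

lemma WN_tp: "WN_w t \<Longrightarrow> \<exists>G A n. tp G t A n"
proof -
  assume "WN_w t"
  then obtain u where u: "wstep\<^sup>*\<^sup>* t u" "normal_w u" unfolding WN_w_def by blast
  from NF_tp[OF u(2)] obtain G n where "tp G u Star n" by blast
  have "\<And>n. tp G u Star n \<Longrightarrow> \<exists>n'. tp G t Star n'" using u(1)
  proof (induction rule: converse_rtranclp_induct)
    case base then show ?case by blast
  next
    case (step x y)
    from step.IH[OF step.prems] obtain n' where "tp G y Star n'" by blast
    from wstep_SE[OF step.hyps(1) this] show ?case .
  qed
  with \<open>tp G u Star n\<close> show ?thesis by blast
qed

lemma tp_SN: "tp G t A n \<Longrightarrow> SN_w t"
proof -
  assume t: "tp G t A n"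
  show "SN_w t" unfolding SN_w_def
  proof
    assume "\<exists>f. f 0 = t \<and> (\<forall>i. wstep (f i) (f (Suc i)))"
    then obtain f where f: "f 0 = t" "\<And>i. wstep (f i) (f (Suc i))" by blast
    have "\<exists>G' k. tp G' (f i) A k \<and> k + i \<le> n" for i
    proof (induction i)
      case 0 then show ?case using t f(1) by auto
    next
      case (Suc i)
      then obtain G' k where "tp G' (f i) A k" "k + i \<le> n" by blast
      with wstep_SR[OF f(2)[of i]] obtain G'' k' where "k' < k" "tp G'' (f (Suc i)) A k'" by blast
      with \<open>k + i \<le> n\<close> show ?case by (intro exI[of _ G''] exI[of _ k']) simp
    qed
    from this[of "Suc n"] show False by auto
  qed
qed

lemma SN_WN: "SN_w t \<Longrightarrow> WN_w t"
proof (rule ccontr)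
  assume sn: "SN_w t" and nwn: "\<not> WN_w t"
  have step: "\<exists>u. wstep x u \<and> \<not> WN_w u" if "\<not> WN_w x" for x
  proof -
    from that have "\<not> normal_w x" unfolding WN_w_def by blast
    then obtain u where u: "wstep x u" unfolding normal_w_def by blast
    have "\<not> WN_w u"
    proof
      assume "WN_w u"
      then obtain v where "wstep\<^sup>*\<^sup>* u v" "normal_w v" unfolding WN_w_def by blast
      with u have "WN_w x" unfolding WN_w_def by (meson converse_rtranclp_into_rtranclp)
      with that show False by blast
    qed
    with u show ?thesis by blast
  qed
  define f where "f = rec_nat t (\<lambda>_ x. SOME u. wstep x u \<and> \<not> WN_w u)"
  have f0: "f 0 = t" and fS: "f (Suc i) = (SOME u. wstep (f i) u \<and> \<not> WN_w u)" for i by (simp_all add: f_def)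
  have nw: "\<not> WN_w (f i)" for i
  proof (induction i)
    case 0 then show ?case using nwn f0 by simp
  next
    case (Suc i)
    from someI_ex[OF step[OF Suc]] show ?case by (simp add: fS)
  qed
  have "wstep (f i) (f (Suc i))" for i
    using someI_ex[OF step[OF nw[of i]]] by (simp add: fS)
  with f0 sn show False unfolding SN_w_def by blast
qed

theorem corollary6p6:
  fixes t :: trm
  shows "WN_w t \<longleftrightarrow> SN_w t"
  using WN_tp tp_SN SN_WN by blast

end
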